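(* Let $\lambda,\mu\in\mathbb{C}^*$, $\alpha,\beta\in\mathbb{C}$ and $t,t'\in\{1,-1\}$, and let $\mathcal{M}_t(\lambda,\alpha)$ denote the $\mathcal{T}$-modules described in the context. Then: (i) $\Pi(\mathcal{M}_t(\lambda,\alpha))\not\cong\mathcal{M}_{t'}(\mu',\beta')$ for any $\mu'\in\mathbb{C}^*$, $\beta'\in\mathbb{C}$; (ii) $\mathcal{M}_t(\lambda,\alpha)\cong\mathcal{M}_{t'}(\mu,\beta)$ if and only if $\lambda=\mu$, $\alpha=\beta$ and $t=t'$.
   Context: The twisted $N=2$ superconformal algebra $\mathcal{T}$ is the Lie superalgebra over $\mathbb{C}$ with basis $\{L_m, I_r, G_p\mid m\in\mathbb{Z}, r\in\frac12+\mathbb{Z}, p\in\frac12\mathbb{Z}\}$, even part spanned by the $L_m,I_r$, odd part spanned by the $G_p$, and with the only nonzero brackets $[L_m,L_n]=(m-n)L_{m+n}$, $[L_m,I_r]=-rI_{m+r}$, $[L_m,G_p]=(\frac m2-p)G_{m+p}$, $[I_r,G_p]=G_{r+p}$, and $[G_p,G_q]=(-1)^{2p}2L_{p+q}$ if $p+q\in\mathbb{Z}$, $[G_p,G_q]=(-1)^{2p+1}(p-q)I_{p+q}$ if $p+q\in\frac12+\mathbb{Z}$. Modules are $\mathbb{Z}_2$-graded (super)modules and isomorphisms preserve parity; $\Pi$ is the parity-change functor. For $\lambda\in\mathbb{C}^*,\alpha\in\mathbb{C},t=\pm1$, $\mathcal{M}_t(\lambda,\alpha)$ is the space $\mathbb{C}[\partial^2]\oplus\partial\mathbb{C}[\partial^2]$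 ($\partial$ a formal variable) with even part $\mathbb{C}[\partial^2]$, odd part $\partial\mathbb{C}[\partial^2]$, and action ($m\in\mathbb{Z}$, $r\in\frac12+\mathbb{Z}$, $p\in\frac12\mathbb{Z}$): $L_mf(\partial^2)=\lambda^m(\partial^2+m\alpha)f(\partial^2+m)$, $L_m\partial f(\partial^2)=\lambda^m(\partial^2+m(\alpha+\frac12))\partial f(\partial^2+m)$, $I_rf(\partial^2)=-2t^{2r}\lambda^{r}\alpha f(\partial^2+r)$, $I_r\partial f(\partial^2)=t^{2r}\lambda^{r}(1-2\alpha)\partial f(\partial^2+r)$, $G_pf(\partial^2)=t^{2p}\lambda^p\partial f(\partial^2+p)$, $G_p\partial f(\partial^2)=(-t)^{2p}\lambda^p(\partial^2+2p\alpha)f(\partial^2+p)$. For $p\in\frac12\mathbb{Z}$, $\lambda^p$ means $(\lambda^{1/2})^{2p}$ for a fixed square root $\lambda^{1/2}$ (likewise for $\mu$). *)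

theory Defs
  imports Complex_Main "HOL-Computational_Algebra.Polynomial"
begin

text \<open>Basis of the twisted N=2 superconformal algebra T.
  TL m   is L_m   (m integer),
  TI k   is I_(k + 1/2)  (k integer, so r = k + 1/2 ranges over 1/2 + Z),
  TG n   is G_(n/2)  (n integer, so p = n/2 ranges over (1/2) Z).\<close>
datatype Tbasis = TL int | TI int | TG int

text \<open>An element of M_t(lambda,alpha) = C[d^2] + d C[d^2] is represented as a pair (f, g)
  of polynomials, standing for f(d^2) + d g(d^2); the first component is the even part,
  the second the odd part.\<close>
type_synonym selt = "complex poly \<times> complex poly"

definition shift :: "complex \<Rightarrow> complex poly \<Rightarrow> complex poly" where
  "shift c f = pcompose f [:c, 1:]"

text \<open>lambda^p = (lambda^(1/2))^(2p) with the fixed square root csqrt lambda.\<close>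
definition hpow :: "complex \<Rightarrow> int \<Rightarrow> complex" where
  "hpow lam n = csqrt lam powi n"

definition Mact :: "complex \<Rightarrow> complex \<Rightarrow> complex \<Rightarrow> Tbasis \<Rightarrow> selt \<Rightarrow> selt" where
  "Mact t lam al x v = (case v of (f, g) \<Rightarrow> (case x of
     TL m \<Rightarrow> (smult (lam powi m) ([:of_int m * al, 1:] * shift (of_int m) f),
              smult (lam powi m) ([:of_int m * (al + 1/2), 1:] * shift (of_int m) g))
   | TI k \<Rightarrow> (smult (-2 * t powi (2*k+1) * hpow lam (2*k+1) * al) (shift (of_int k + 1/2) f),
              smult (t powi (2*k+1) * hpow lam (2*k+1) * (1 - 2*al)) (shift (of_int k + 1/2) g))
   | TG n \<Rightarrow> (smult ((-t) powi n * hpow lam n) ([:of_int n * al, 1:] * shift (of_int n / 2) g),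
              smult (t powi n * hpow lam n) (shift (of_int n / 2) f))))"

text \<open>Parity change functor: the even part of Pi(M) is the odd part of M and vice versa
  (action unchanged; the sign convention does not affect isomorphism classes).\<close>
definition Pi_act :: "(Tbasis \<Rightarrow> selt \<Rightarrow> selt) \<Rightarrow> Tbasis \<Rightarrow> selt \<Rightarrow> selt" where
  "Pi_act act x v = prod.swap (act x (prod.swap v))"

definition smod_iso :: "(Tbasis \<Rightarrow> selt \<Rightarrow> selt) \<Rightarrow> (Tbasis \<Rightarrow> selt \<Rightarrow> selt) \<Rightarrow> bool" where
  "smod_iso act1 act2 \<longleftrightarrow> (\<exists>\<phi> :: selt \<Rightarrow> selt.
     bij \<phi> \<and>
     (\<forall>f g f' g'. \<phi> (f + f', g + g') = (fst (\<phi> (f, g)) + fst (\<phi> (f', g')), snd (\<phi> (f, g)) + snd (\<phi> (f', g')))) \<and>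
     (\<forall>c f g. \<phi> (smult c f, smult c g) = (smult c (fst (\<phi> (f, g))), smult c (snd (\<phi> (f, g))))) \<and>
     (\<forall>f. snd (\<phi> (f, 0)) = 0) \<and> (\<forall>g. fst (\<phi> (0, g)) = 0) \<and>
     (\<forall>x v. \<phi> (act1 x v) = act2 x (\<phi> v)))"

end

theory Submission
  imports Defs
begin

lemma key:
  fixes \<phi> :: "selt \<Rightarrow> selt"
  assumes bij: "bij \<phi>"
    and add: "\<forall>f g f' g'. \<phi> (f + f', g + g') = (fst (\<phi> (f, g)) + fst (\<phi> (f', g')), snd (\<phi> (f, g)) + snd (\<phi> (f', g')))"
    and sm: "\<forall>c f g. \<phi> (smult c f, smult c g) = (smult c (fst (\<phi> (f, g))), smult c (snd (\<phi> (f, g))))"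
    and ev: "\<forall>f. snd (\<phi> (f, 0)) = 0" and od: "\<forall>g. fst (\<phi> (0, g)) = 0"
    and x: "\<forall>f g. \<phi> ([:0,1:] * f, [:0,1:] * g) = ([:0,1:] * fst (\<phi> (f, g)), [:0,1:] * snd (\<phi> (f, g)))"
  shows "\<exists>c d. c \<noteq> 0 \<and> d \<noteq> 0 \<and> (\<forall>f g. \<phi> (f, g) = (smult c f, smult d g))"
proof -
  define A where "A f = fst (\<phi> (f, 0))" for f
  define B where "B g = snd (\<phi> (0, g))" for g
  have split: "\<phi> (f, g) = (A f, B g)" for f g
    using add[rule_format, of f 0 0 g] ev od by (simp add: A_def B_def)
  have Ax: "A ([:0,1:] * f) = [:0,1:] * A f" for f
    using x[rule_format, of f 0] by (simp add: A_def)
  have Bx: "B ([:0,1:] * f) = [:0,1:] * B f" for f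
    using x[rule_format, of 0 f] by (simp add: B_def)
  have Aadd: "A (f + f') = A f + A f'" for f f'
    using add[rule_format, of f f' 0 0] by (simp add: A_def)
  have Badd: "B (f + f') = B f + B f'" for f f'
    using add[rule_format, of 0 0 f f'] by (simp add: B_def)
  have Asm: "A (smult c f) = smult c (A f)" for c f
    using sm[rule_format, of c f 0] by (simp add: A_def)
  have Bsm: "B (smult c f) = smult c (B f)" for c f
    using sm[rule_format, of c 0 f] by (simp add: B_def)
  have pc: "pCons c p = smult c 1 + [:0,1:] * p" for c :: complex and p
    by (simp add: mult_pCons_left)
  have Af: "A f = f * A 1" for f
  proof (induction f)
    case (pCons c p)
    have "A (pCons c p) = A (smult c 1) + A ([:0,1:]*p)" by (subst pc) (rule Aadd)
    also have "\<dots> = smult c (A 1) + [:0,1:] * (p * A 1)" by (simp only: Asm Ax pCons.IH)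
    also have "\<dots> = pCons c p * A 1" by (simp add: mult_pCons_left)
    finally show ?case .
  qed (use Asm[of 0 1] in simp)
  have Bf: "B f = f * B 1" for f
  proof (induction f)
    case (pCons c p)
    have "B (pCons c p) = B (smult c 1) + B ([:0,1:]*p)" by (subst pc) (rule Badd)
    also have "\<dots> = smult c (B 1) + [:0,1:] * (p * B 1)" by (simp only: Bsm Bx pCons.IH)
    also have "\<dots> = pCons c p * B 1" by (simp add: mult_pCons_left)
    finally show ?case .
  qed (use Bsm[of 0 1] in simp)
  have su: "surj \<phi>" using bij by (rule bij_is_surj)
  obtain v where v: "\<phi> v = (1, 0)" using su by (metis surjD)
  obtain f g where fg: "\<phi> (f, g) = (1, 0)" using v by (cases v) auto
  obtain v' where v': "\<phi> v' = (0, 1)" using su by (metis surjD)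
  obtain f' g' where fg': "\<phi> (f', g') = (0, 1)" using v' by (cases v') auto
  have a1: "f * A 1 = 1" using fg split[of f g] Af[of f] by simp
  have b1: "g' * B 1 = 1" using fg' split[of f' g'] Bf[of g'] by simp
  have "degree (A 1) = 0"
  proof -
    have "f \<noteq> 0" "A 1 \<noteq> 0" using a1 by auto
    then have "degree (f * A 1) = degree f + degree (A 1)" by (rule degree_mult_eq)
    then show ?thesis using a1 by simp
  qed
  then obtain c where c: "A 1 = [:c:]" by (metis degree_eq_zeroE)
  have "degree (B 1) = 0"
  proof -
    have "g' \<noteq> 0" "B 1 \<noteq> 0" using b1 by auto
    then have "degree (g' * B 1) = degree g' + degree (B 1)" by (rule degree_mult_eq)
    then show ?thesis using b1 by simp
  qed
  then obtain d where d: "B 1 = [:d:]" by (metis degree_eq_zeroE)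
  have "c \<noteq> 0" using a1 c by auto
  moreover have "d \<noteq> 0" using b1 d by auto
  moreover have "\<forall>f g. \<phi> (f, g) = (smult c f, smult d g)"
  proof (intro allI)
    fix f g
    have "A f = f * [:c:]" using Af[of f] c by (simp only:)
    moreover have "B g = g * [:d:]" using Bf[of g] d by (simp only:)
    ultimately show "\<phi> (f, g) = (smult c f, smult d g)" using split[of f g] by simp
  qed
  ultimately show ?thesis by blast
qed

lemma iso_form:
  assumes iso: "smod_iso a1 a2"
    and h1: "\<forall>f g. a1 (TL 0) (f, g) = ([:0,1:] * f, [:0,1:] * g)"
    and h2: "\<forall>f g. a2 (TL 0) (f, g) = ([:0,1:] * f, [:0,1:] * g)"
  shows "\<exists>c d. c \<noteq> 0 \<and> d \<noteq> 0 \<and> (\<forall>x f g. (smult c (fst (a1 x (f, g))), smult d (snd (a1 x (f, g)))) = a2 x (smult c f, smult d g))"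
proof -
  obtain \<phi> :: "selt \<Rightarrow> selt" where bij: "bij \<phi>"
    and add: "\<forall>f g f' g'. \<phi> (f + f', g + g') = (fst (\<phi> (f, g)) + fst (\<phi> (f', g')), snd (\<phi> (f, g)) + snd (\<phi> (f', g')))"
    and sm: "\<forall>c f g. \<phi> (smult c f, smult c g) = (smult c (fst (\<phi> (f, g))), smult c (snd (\<phi> (f, g))))"
    and ev: "\<forall>f. snd (\<phi> (f, 0)) = 0" and od: "\<forall>g. fst (\<phi> (0, g)) = 0"
    and int: "\<forall>x v. \<phi> (a1 x v) = a2 x (\<phi> v)"
    using iso unfolding smod_iso_def by blast
  have x: "\<forall>f g. \<phi> ([:0,1:] * f, [:0,1:] * g) = ([:0,1:] * fst (\<phi> (f, g)), [:0,1:] * snd (\<phi> (f, g)))"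
  proof (intro allI)
    fix f g
    have "\<phi> ([:0,1:] * f, [:0,1:] * g) = \<phi> (a1 (TL 0) (f, g))" using h1 by simp
    also have "\<dots> = a2 (TL 0) (\<phi> (f, g))" using int by blast
    also have "\<dots> = a2 (TL 0) (fst (\<phi> (f, g)), snd (\<phi> (f, g)))" by simp
    also have "\<dots> = ([:0,1:] * fst (\<phi> (f, g)), [:0,1:] * snd (\<phi> (f, g)))" using h2 by blast
    finally show "\<phi> ([:0,1:] * f, [:0,1:] * g) = ([:0,1:] * fst (\<phi> (f, g)), [:0,1:] * snd (\<phi> (f, g)))" .
  qed
  obtain c d where cd: "c \<noteq> 0" "d \<noteq> 0" "\<forall>f g. \<phi> (f, g) = (smult c f, smult d g)"
    using key[OF bij add sm ev od x] by blast
  have "(smult c (fst (a1 x (f, g))), smult d (snd (a1 x (f, g)))) = a2 x (smult c f, smult d g)" for x f g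
  proof -
    have e1: "\<phi> (a1 x (f, g)) = a2 x (smult c f, smult d g)" using int cd(3) by simp
    have e2: "\<phi> (a1 x (f, g)) = (smult c (fst (a1 x (f, g))), smult d (snd (a1 x (f, g))))"
      using cd(3)[rule_format, of "fst (a1 x (f, g))" "snd (a1 x (f, g))"] by simp
    show ?thesis using e1 e2 by simp
  qed
  then show ?thesis using cd by blast
qed

lemma M0: "Mact t lam al (TL 0) (f, g) = ([:0,1:] * f, [:0,1:] * g)"
  by (simp add: Mact_def shift_def)

lemma P0: "Pi_act (Mact t lam al) (TL 0) (f, g) = ([:0,1:] * f, [:0,1:] * g)"
  by (simp add: Pi_act_def Mact_def shift_def)

theorem theorem2p7:
  fixes lam mu al be t t' :: complex
  assumes "lam \<noteq> 0" and "mu \<noteq> 0"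
    and "t = 1 \<or> t = -1" and "t' = 1 \<or> t' = -1"
  shows "(\<forall>mu' be'. mu' \<noteq> 0 \<longrightarrow> \<not> smod_iso (Pi_act (Mact t lam al)) (Mact t' mu' be'))
       \<and> (smod_iso (Mact t lam al) (Mact t' mu be) \<longleftrightarrow> lam = mu \<and> al = be \<and> t = t')"
proof (rule conjI)
 show "\<forall>mu' be'. mu' \<noteq> 0 \<longrightarrow> \<not> smod_iso (Pi_act (Mact t lam al)) (Mact t' mu' be')"
 proof (intro allI impI notI)
  fix mu' be'
  assume "mu' \<noteq> 0" and iso: "smod_iso (Pi_act (Mact t lam al)) (Mact t' mu' be')"
  obtain c d where cd: "c \<noteq> 0" "d \<noteq> 0"
    "\<forall>x f g. (smult c (fst (Pi_act (Mact t lam al) x (f, g))), smult d (snd (Pi_act (Mact t lam al) x (f, g)))) = Mact t' mu' be' x (smult c f, smult d g)"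
    using iso_form[OF iso] P0 M0 by blast
  note e1 = cd(3)[rule_format, of "TL 1" 1 0]
  note e2 = cd(3)[rule_format, of "TL 1" 0 1]
  have h1: "al + 1 / 2 = be'"
    using e1 cd(1,2) \<open>mu' \<noteq> 0\<close> by (simp add: Mact_def Pi_act_def shift_def pcompose_1) (metis mult_left_cancel)
  have h2: "al = be' + 1 / 2"
    using e2 cd(1,2) \<open>mu' \<noteq> 0\<close> by (simp add: Mact_def Pi_act_def shift_def pcompose_1) (metis mult_left_cancel)
  from h1 h2 show False by simp
qed
 show "smod_iso (Mact t lam al) (Mact t' mu be) \<longleftrightarrow> lam = mu \<and> al = be \<and> t = t'"
 proof
  assume iso: "smod_iso (Mact t lam al) (Mact t' mu be)"
  obtain c d where cd: "c \<noteq> 0" "d \<noteq> 0"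
    "\<forall>x f g. (smult c (fst (Mact t lam al x (f, g))), smult d (snd (Mact t lam al x (f, g)))) = Mact t' mu be x (smult c f, smult d g)"
    using iso_form[OF iso] M0 by blast
  note e1 = cd(3)[rule_format, of "TL 1" 1 0]
  note e2 = cd(3)[rule_format, of "TI 0" 1 0]
  note e3 = cd(3)[rule_format, of "TI 0" 0 1]
  have "lam = mu \<and> al = be" using e1 cd(1,2) assms(1) by (simp add: Mact_def shift_def pcompose_1) (metis mult_left_cancel)
  moreover have "t = t'"
  proof -
    have q1: "t * (hpow lam 1 * al) = t' * (hpow mu 1 * be)"
      and q2: "t * (hpow lam 1 * (1 - 2 * al)) = t' * (hpow mu 1 * (1 - 2 * be))"
      using e2 e3 cd(1,2) by (simp_all add: Mact_def shift_def pcompose_1)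
    note lm = \<open>lam = mu \<and> al = be\<close>
    have h0: "hpow lam 1 \<noteq> 0" using assms(1) by (simp add: hpow_def)
    show ?thesis using q1 q2 lm h0 by auto
  qed
  ultimately show "lam = mu \<and> al = be \<and> t = t'" by blast
next
  assume "lam = mu \<and> al = be \<and> t = t'"
  then show "smod_iso (Mact t lam al) (Mact t' mu be)"
    unfolding smod_iso_def by (intro exI[of _ id]) simp
 qed
qed

end
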